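(* Let $k\ge3$, $1\le s\le k$, $\mathbf n=(n_1,\dots,n_k)$, $r\le\min\{n_1,\dots,n_s\}$. For every $\mathcal A\in P_s(\mathbf n,r)$, $\operatorname{rank}(\mathcal A)=\operatorname{rank}(A_1)$, where $A_1\in\mathbb R^{n_1\times\prod_{i=2}^kn_i}$ is the flattening (matricization) of $\mathcal A$ with respect to its first factor.
   Context: $P_s(\mathbf n,r)$ is the set of tensors $\sum_{i=1}^r\sigma_i\mathbf a^{(1)}_i\otimes\cdots\otimes\mathbf a^{(k)}_i$ with $\sigma_i\in\mathbb R$, all $\mathbf a^{(l)}_i\in\mathbb R^{n_l}$ unit vectors, and for each $l\le s$ the vectors $\mathbf a^{(l)}_1,\dots,\mathbf a^{(l)}_r$ pairwise orthogonal. $\operatorname{rank}(\mathcal A)$ is the CP rank (least number of rank-one tensors summing to $\mathcal A$). *)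

theory Defs
  imports "Jordan_Normal_Form.DL_Rank"
begin

text \<open>Order-k real tensors with dimension list ns = [n_1,...,n_k] (k = length ns) are
  represented as functions from index lists to reals; only valid index lists matter.
  Modes are numbered 0..k-1 (paper: 1..k). Vectors in R^m are functions nat => real
  of which only entries j < m matter.\<close>

definition valid_index :: "nat list \<Rightarrow> nat list \<Rightarrow> bool" where
  "valid_index ns is \<longleftrightarrow> length is = length ns \<and> (\<forall>l<length ns. is ! l < ns ! l)"

definition cp_rank :: "nat list \<Rightarrow> (nat list \<Rightarrow> real) \<Rightarrow> nat" where
  "cp_rank ns T = (LEAST R. \<exists>a :: nat \<Rightarrow> nat \<Rightarrow> nat \<Rightarrow> real.
      \<forall>is. valid_index ns is \<longrightarrow> T is = (\<Sum>i<R. \<Prod>l<length ns. a i l (is ! l)))"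

definition P_set :: "nat \<Rightarrow> nat list \<Rightarrow> nat \<Rightarrow> (nat list \<Rightarrow> real) set" where
  "P_set s ns r = {T. \<exists>(\<sigma> :: nat \<Rightarrow> real) (a :: nat \<Rightarrow> nat \<Rightarrow> nat \<Rightarrow> real).
      (\<forall>i<r. \<forall>l<length ns. (\<Sum>j<ns ! l. (a i l j)\<^sup>2) = 1) \<and>
      (\<forall>l<s. \<forall>i<r. \<forall>i'<r. i \<noteq> i' \<longrightarrow> (\<Sum>j<ns ! l. a i l j * a i' l j) = 0) \<and>
      (\<forall>is. valid_index ns is \<longrightarrow> T is = (\<Sum>i<r. \<sigma> i * (\<Prod>l<length ns. a i l (is ! l))))}"

text \<open>Mixed-radix decoding of a column index of the mode-1 flattening into the
  remaining tensor indices (first remaining index varies fastest).\<close>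
fun unflat :: "nat list \<Rightarrow> nat \<Rightarrow> nat list" where
  "unflat [] j = []"
| "unflat (m # ms) j = (j mod m) # unflat ms (j div m)"

definition flatten1 :: "nat list \<Rightarrow> (nat list \<Rightarrow> real) \<Rightarrow> real mat" where
  "flatten1 ns T = mat (hd ns) (prod_list (tl ns)) (\<lambda>(i, j). T (i # unflat (tl ns) j))"

end

theory Submission
  imports Defs
begin


lemma (in vec_space) G:
  assumes W: "W \<subseteq> carrier_vec n" and fin: "finite W"
  shows "\<exists>U\<subseteq>W. lin_indpt U \<and> card U \<le> n \<and>
          (\<forall>v\<in>W. \<exists>c. \<forall>x<n. v $ x = (\<Sum>u\<in>U. c u * u $ x))"
proof -
  have li0: "lin_indpt {}" by (metis empty_subsetI fin_dim finite_basis_exists subset_li_is_li vec_vs vectorspace.basis_def)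
  obtain U where Uf: "finite U" and Um: "maximal U (\<lambda>T. T \<subseteq> W \<and> lin_indpt T)"
    using maximal_exists_superset[of W "\<lambda>T. T \<subseteq> W \<and> lin_indpt T" "{}"] fin li0 by blast
  have UW: "U \<subseteq> W" and Uli: "lin_indpt U" using Um unfolding maximal_def by auto
  have UC: "U \<subseteq> carrier_vec n" using UW W by auto
  have "card U \<le> n"
    using li_le_dim(2)[OF fin_dim _ Uli] UC dim_is_n by auto
  moreover have "\<exists>c. \<forall>x<n. v $ x = (\<Sum>u\<in>U. c u * u $ x)" if vW: "v \<in> W" for v
  proof (cases "v \<in> U")
    case True
    show ?thesis
    proof (rule exI[of _ "\<lambda>u. if u = v then 1 else 0"], intro allI impI)
      fix x assume "x < n"
      have "(\<Sum>u\<in>U. (if u = v then 1 else 0) * u $ x) = (\<Sum>u\<in>U. if u = v then v $ x else 0)"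
        by (rule sum.cong) auto
      also have "\<dots> = v $ x" using True Uf by simp
      finally show "v $ x = (\<Sum>u\<in>U. (if u = v then 1 else 0) * u $ x)" by simp
    qed
  next
    case False
    have "lin_dep (U \<union> {v})"
    proof (rule ccontr)
      assume li: "lin_indpt (U \<union> {v})"
      have "U \<union> {v} \<subseteq> W" using UW vW by auto
      then have "U = U \<union> {v}" using Um li unfolding maximal_def by blast
      then show False using False by auto
    qed
    then have "v \<in> span U" using lin_dep_iff_in_span[OF UC Uli _ False] vW W by auto
    then obtain a A where vA: "v = lincomb a A" "finite A" "A \<subseteq> U" using in_spanE by blast
    show ?thesis
    proof (rule exI[of _ "\<lambda>u. if u \<in> A then a u else 0"], intro allI impI)
      fix x assume x: "x < n"
      have "v $ x = (\<Sum>u\<in>A. a u * u $ x)" using lincomb_index[OF x] vA UC by auto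
      also have "\<dots> = (\<Sum>u\<in>U. (if u \<in> A then a u else 0) * u $ x)"
        by (rule sum.mono_neutral_cong_left) (use Uf vA in auto)
      finally show "v $ x = (\<Sum>u\<in>U. (if u \<in> A then a u else 0) * u $ x)" .
    qed
  qed
  ultimately show ?thesis using UW Uli by blast
qed


lemma valid_index_Cons:
  "valid_index (m # ms) is \<longleftrightarrow> (\<exists>x t. is = x # t \<and> x < m \<and> valid_index ms t)"
proof
  assume "valid_index (m # ms) is"
  then show "\<exists>x t. is = x # t \<and> x < m \<and> valid_index ms t"
  proof (cases "is")
    case Nil
    then show ?thesis using \<open>valid_index (m # ms) is\<close> by (simp add: valid_index_def)
  next
    case (Cons x t)
    have "x < m" using \<open>valid_index (m # ms) is\<close> Cons unfolding valid_index_def by force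
    moreover have "valid_index ms t" unfolding valid_index_def
    proof (intro conjI allI impI)
      show "length t = length ms" using \<open>valid_index (m # ms) is\<close> Cons unfolding valid_index_def by simp
      fix l assume "l < length ms"
      then have "Suc l < length (m # ms)" by simp
      then have "is ! Suc l < (m # ms) ! Suc l" using \<open>valid_index (m # ms) is\<close> unfolding valid_index_def by blast
      then show "t ! l < ms ! l" using Cons by simp
    qed
    ultimately show ?thesis using Cons by blast
  qed
next
  assume "\<exists>x t. is = x # t \<and> x < m \<and> valid_index ms t"
  then show "valid_index (m # ms) is"
    unfolding valid_index_def by (auto simp: nth_Cons' )
qed

lemma unflat_valid: "j < prod_list ms \<Longrightarrow> valid_index ms (unflat ms j)"
proof (induction ms arbitrary: j)
  case Nil
  then show ?case by (simp add: valid_index_def)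
next
  case (Cons m ms)
  have jm: "j < m * prod_list ms" using Cons.prems by simp
  then have m: "m > 0" by (metis gr0I mult_is_0 not_less_zero)
  have "j div m < prod_list ms" using jm m
    by (simp add: div_less_iff_less_mult mult.commute)
  then show ?case using Cons.IH m by (auto simp: valid_index_Cons)
qed

lemma unflat_surj: "valid_index ms t \<Longrightarrow> \<exists>j<prod_list ms. unflat ms j = t"
proof (induction ms arbitrary: t)
  case Nil
  then show ?case by (simp add: valid_index_def)
next
  case (Cons m ms)
  then obtain x t' where t: "t = x # t'" "x < m" "valid_index ms t'" by (auto simp: valid_index_Cons)
  then obtain j' where j': "j' < prod_list ms" "unflat ms j' = t'" using Cons.IH by blast
  define j where "j = x + m * j'"
  have "j mod m = x" "j div m = j'" using t(2) by (auto simp: j_def)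
  moreover have "j < m * prod_list ms"
  proof -
    have "j < m + m * j'" using t(2) by (simp add: j_def)
    also have "\<dots> = m * Suc j'" by simp
    also have "\<dots> \<le> m * prod_list ms" using j'(1) by (intro mult_le_mono2) simp
    finally show ?thesis .
  qed
  ultimately show ?case using t j' by (auto intro!: exI[of _ j])
qed



lemma rank_sum_rank1:
  fixes g h :: "nat \<Rightarrow> nat \<Rightarrow> real"
  shows "vec_space.rank n (mat n N (\<lambda>(x, j). \<Sum>i<R. g i x * h i j)) \<le> R"
proof (induction R)
  case 0
  have z: "mat n N (\<lambda>(x, j). \<Sum>i<0. g i x * h i j) = (0\<^sub>m n N :: real mat)"
    by (rule eq_matI) auto
  show ?case unfolding z using vec_space.rank_0I[of n N, where 'a = real] by linarith
next
  case (Suc R)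
  have eq: "mat n N (\<lambda>(x, j). \<Sum>i<Suc R. g i x * h i j) =
      mat n N (\<lambda>(x, j). \<Sum>i<R. g i x * h i j) + mat n N (\<lambda>(x, j). g R x * h R j)"
    by (rule eq_matI) (auto simp: lessThan_Suc)
  have r1: "vec_space.rank n (mat n N (\<lambda>(x, j). g R x * h R j)) \<le> 1"
    by (rule vec_space.rank_le_1_product_entries[where f = "g R" and g = "h R" and nc = N]) simp_all
  have "vec_space.rank n (mat n N (\<lambda>(x, j). \<Sum>i<Suc R. g i x * h i j)) \<le>
     vec_space.rank n (mat n N (\<lambda>(x, j). \<Sum>i<R. g i x * h i j)) + vec_space.rank n (mat n N (\<lambda>(x, j). g R x * h R j))"
    unfolding eq by (rule vec_space.rank_subadditive[of _ n N]) simp_all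
  then show ?case using Suc.IH r1 by linarith
qed

lemma (in vec_space) G_rank:
  assumes A: "A \<in> carrier_mat n nc"
  shows "\<exists>U\<subseteq>set (cols A). card U \<le> rank A \<and>
          (\<forall>v\<in>set (cols A). \<exists>c. \<forall>x<n. v $ x = (\<Sum>u\<in>U. c u * u $ x))"
proof -
  have "set (cols A) \<subseteq> carrier_vec n" using cols_dim A by blast
  from G[OF this] obtain U where "U \<subseteq> set (cols A)" "lin_indpt U"
    "\<forall>v\<in>set (cols A). \<exists>c. \<forall>x<n. v $ x = (\<Sum>u\<in>U. c u * u $ x)" by auto
  moreover have "card U \<le> rank A" using rank_ge_card_indpt[OF A] calculation by blast
  ultimately show ?thesis by blast
qed

lemma (in vec_space) G_dim:
  fixes W :: "'a vec set"
  assumes "W \<subseteq> carrier_vec n" "finite W"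
  shows "\<exists>U\<subseteq>W. card U \<le> n \<and>
          (\<forall>v\<in>W. \<exists>c. \<forall>x<n. v $ x = (\<Sum>u\<in>U. c u * u $ x))"
  using G[OF assms] by blast


theorem proposition3p4:
  fixes ns :: "nat list" and s r :: nat and A :: "nat list \<Rightarrow> real"
  assumes "length ns \<ge> 3"
    and "1 \<le> s" and "s \<le> length ns"
    and "\<forall>l<s. r \<le> ns ! l"
    and "A \<in> P_set s ns r"
  shows "cp_rank ns A = vec_space.rank (ns ! 0) (flatten1 ns A)"
proof -
  obtain n0 ms where ns: "ns = n0 # ms" using assms(1) by (cases ns) auto
  obtain \<sigma> a where nrm: "\<forall>i<r. \<forall>l<length ns. (\<Sum>j<ns ! l. (a i l j)\<^sup>2) = 1"
    and orth: "\<forall>l<s. \<forall>i<r. \<forall>i'<r. i \<noteq> i' \<longrightarrow> (\<Sum>j<ns ! l. a i l j * a i' l j) = 0"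
    and Adef: "\<forall>is. valid_index ns is \<longrightarrow> A is = (\<Sum>i<r. \<sigma> i * (\<Prod>l<length ns. a i l (is ! l)))"
    using assms(5) unfolding P_set_def by blast
  define N where "N = prod_list ms"
  define e where "e i t = \<sigma> i * (\<Prod>l<length ms. a i (Suc l) (t ! l))" for i t
  have vCons: "valid_index ns is \<longleftrightarrow> (\<exists>x t. is = x # t \<and> x < n0 \<and> valid_index ms t)" for "is"
    unfolding ns by (rule valid_index_Cons)
  have prodC: "(\<Prod>l<length ns. f l ((x # t) ! l)) = f 0 x * (\<Prod>l<length ms. f (Suc l) (t ! l))"
    for f :: "nat \<Rightarrow> nat \<Rightarrow> real" and x t
    unfolding ns by (simp only: length_Cons prod.lessThan_Suc_shift nth_Cons_0 nth_Cons_Suc)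
  have Adec: "A (x # t) = (\<Sum>i<r. a i 0 x * e i t)" if "x < n0" "valid_index ms t" for x t
  proof -
    have "valid_index ns (x # t)" using that vCons by blast
    then have "A (x # t) = (\<Sum>i<r. \<sigma> i * (\<Prod>l<length ns. a i l ((x # t) ! l)))" using Adef by blast
    also have "\<dots> = (\<Sum>i<r. a i 0 x * e i t)"
      by (rule sum.cong) (simp_all add: prodC e_def)
    finally show ?thesis .
  qed
  have ON: "(\<Sum>x<n0. a i 0 x * a m 0 x) = (if m = i then 1 else 0)" if "i < r" "m < r" for i m
  proof (cases "m = i")
    case True
    have "(\<Sum>j<ns ! 0. (a i 0 j)\<^sup>2) = 1" using nrm that ns by (metis length_greater_0_conv list.distinct(1))
    then show ?thesis using True unfolding ns by (simp add: power2_eq_square)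
  next
    case False
    then show ?thesis using orth that assms(2) unfolding ns by fastforce
  qed
  have IP: "(\<Sum>x<n0. a i 0 x * A (x # t)) = e i t" if "i < r" "valid_index ms t" for i t
  proof -
    have "(\<Sum>x<n0. a i 0 x * A (x # t)) = (\<Sum>x<n0. \<Sum>m<r. a i 0 x * a m 0 x * e m t)"
      using that by (intro sum.cong refl) (simp add: Adec sum_distrib_left mult.assoc)
    also have "\<dots> = (\<Sum>m<r. (\<Sum>x<n0. a i 0 x * a m 0 x) * e m t)"
      by (subst sum.swap) (simp add: sum_distrib_right)
    also have "\<dots> = (\<Sum>m<r. (if m = i then e m t else 0))"
      by (intro sum.cong refl) (simp add: ON that)
    also have "\<dots> = e i t" using that by simp
    finally show ?thesis .
  qed
  have Mc: "flatten1 ns A \<in> carrier_mat n0 N" by (simp add: flatten1_def ns N_def)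
  have Me: "flatten1 ns A $$ (x, j) = A (x # unflat ms j)" if "x < n0" "j < N" for x j
    using that by (simp add: flatten1_def ns N_def)
  have n00: "ns ! 0 = n0" using ns by simp
  have vT: "valid_index ms (unflat ms j)" if "j < N" for j using unflat_valid that N_def by blast
  have ex: "\<exists>b :: nat \<Rightarrow> nat \<Rightarrow> nat \<Rightarrow> real. \<forall>is. valid_index ns is \<longrightarrow> A is = (\<Sum>i<r. \<Prod>l<length ns. b i l (is ! l))"
  proof (intro exI allI impI)
    fix "is" assume v: "valid_index ns is"
    then obtain x t where xt: "is = x # t" "x < n0" "valid_index ms t" using vCons by blast
    show "A is = (\<Sum>i<r. \<Prod>l<length ns. (\<lambda>i l y. if l = 0 then \<sigma> i * a i 0 y else a i l y) i l (is ! l))"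
    proof -
      have "(\<Prod>l<length ns. (\<lambda>i l y. if l = 0 then \<sigma> i * a i 0 y else a i l y) i l (is ! l)) = a i 0 x * e i t" for i
        unfolding xt(1) using prodC[of "\<lambda>l y. if l = 0 then \<sigma> i * a i 0 y else a i l y" x t]
        by (simp add: e_def mult.assoc mult.left_commute)
      then show ?thesis using Adec[OF xt(2,3)] xt(1) by simp
    qed
  qed
  define R0 where "R0 = cp_rank ns A"
  obtain b :: "nat \<Rightarrow> nat \<Rightarrow> nat \<Rightarrow> real" where hb: "\<forall>is. valid_index ns is \<longrightarrow> A is = (\<Sum>i<R0. \<Prod>l<length ns. b i l (is ! l))"
    using LeastI[of "\<lambda>R. \<exists>b :: nat \<Rightarrow> nat \<Rightarrow> nat \<Rightarrow> real. \<forall>is. valid_index ns is \<longrightarrow> A is = (\<Sum>i<R. \<Prod>l<length ns. b i l (is ! l))" r, OF ex] unfolding R0_def cp_rank_def by blast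
  have Meq: "flatten1 ns A = mat n0 N (\<lambda>(x, j). \<Sum>i<R0. b i 0 x * (\<Prod>l<length ms. b i (Suc l) (unflat ms j ! l)))"
  proof (rule eq_matI)
    fix x j assume "x < dim_row (mat n0 N (\<lambda>(x, j). \<Sum>i<R0. b i 0 x * (\<Prod>l<length ms. b i (Suc l) (unflat ms j ! l))))"
      "j < dim_col (mat n0 N (\<lambda>(x, j). \<Sum>i<R0. b i 0 x * (\<Prod>l<length ms. b i (Suc l) (unflat ms j ! l))))"
    then have xj: "x < n0" "j < N" by auto
    have "valid_index ns (x # unflat ms j)" using vCons xj vT by blast
    then show "flatten1 ns A $$ (x, j) = mat n0 N (\<lambda>(x, j). \<Sum>i<R0. b i 0 x * (\<Prod>l<length ms. b i (Suc l) (unflat ms j ! l)))  $$ (x, j)"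
      using hb xj Me[OF xj] by (simp add: prodC)
  qed (use Mc in auto)
  have le1: "vec_space.rank (ns ! 0) (flatten1 ns A) \<le> cp_rank ns A"
    unfolding n00 Meq R0_def[symmetric]
    by (rule rank_sum_rank1[where g = "\<lambda>i x. b i 0 x" and h = "\<lambda>i j. \<Prod>l<length ms. b i (Suc l) (unflat ms j ! l)", simplified])
  have cols_set: "set (cols (flatten1 ns A)) = (\<lambda>j. col (flatten1 ns A) j) ` {..<N}"
    using Mc by (auto simp: cols_def)
  obtain U where UM: "U \<subseteq> set (cols (flatten1 ns A))"
    and Ucard: "card U \<le> vec_space.rank n0 (flatten1 ns A)"
    and Usp: "\<forall>v\<in>set (cols (flatten1 ns A)). \<exists>c. \<forall>x<n0. v $ x = (\<Sum>u\<in>U. c u * u $ x)"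
    using vec_space.G_rank[OF Mc] by blast
  have finU: "finite U" by (rule finite_subset[OF UM]) simp
  have "\<forall>u\<in>U. \<exists>j<N. col (flatten1 ns A) j = u"
  proof
    fix u assume "u \<in> U"
    then have "u \<in> (\<lambda>j. col (flatten1 ns A) j) ` {..<N}" using UM cols_set by (simp only: subset_iff)
    then show "\<exists>j<N. col (flatten1 ns A) j = u" by auto
  qed
  then obtain g where g0: "\<forall>u\<in>U. g u < N \<and> col (flatten1 ns A) (g u) = u" by (rule bchoice[elim_format]) blast
  have g: "g u < N \<and> col (flatten1 ns A) (g u) = u" if "u \<in> U" for u using g0 that by blast
  define T where "T u = unflat ms (g u)" for u
  have vTU: "valid_index ms (T u)" if "u \<in> U" for u unfolding T_def using g[OF that] by (intro vT) simp
  have uent: "u $ x = A (x # T u)" if "u \<in> U" "x < n0" for u x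
  proof -
    have "u $ x = col (flatten1 ns A) (g u) $ x" using g[OF that(1)] by (simp only:)
    also have "\<dots> = flatten1 ns A $$ (x, g u)" using Mc that(2) g[OF that(1)] by (intro index_col) auto
    also have "\<dots> = A (x # T u)" unfolding T_def using Me that(2) g[OF that(1)] by simp
    finally show ?thesis .
  qed
  have colrel: "\<exists>c. \<forall>x<n0. A (x # t) = (\<Sum>u\<in>U. c u * A (x # T u))" if vt: "valid_index ms t" for t
  proof -
    obtain j where j: "j < N" "unflat ms j = t" using unflat_surj[OF vt] unfolding N_def by blast
    have "col (flatten1 ns A) j \<in> set (cols (flatten1 ns A))" using cols_set j by blast
    then obtain c where c: "\<forall>x<n0. col (flatten1 ns A) j $ x = (\<Sum>u\<in>U. c u * u $ x)" using Usp by blast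
    show ?thesis
    proof (intro exI allI impI)
      fix x assume x: "x < n0"
      have "A (x # t) = flatten1 ns A $$ (x, j)" using Me x j by simp
      also have "\<dots> = col (flatten1 ns A) j $ x" using Mc x j by (intro index_col[symmetric]) auto
      also have "\<dots> = (\<Sum>u\<in>U. c u * u $ x)" using c x by blast
      also have "\<dots> = (\<Sum>u\<in>U. c u * A (x # T u))" using uent x by (intro sum.cong refl) simp
      finally show "A (x # t) = (\<Sum>u\<in>U. c u * A (x # T u))" .
    qed
  qed
  have "\<forall>t. \<exists>c. valid_index ms t \<longrightarrow> (\<forall>x<n0. A (x # t) = (\<Sum>u\<in>U. c u * A (x # T u)))"
    using colrel by blast
  then obtain \<mu> where \<mu>: "\<And>t x. valid_index ms t \<Longrightarrow> x < n0 \<Longrightarrow> A (x # t) = (\<Sum>u\<in>U. \<mu> t u * A (x # T u))"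
    using choice[of "\<lambda>t c. valid_index ms t \<longrightarrow> (\<forall>x<n0. A (x # t) = (\<Sum>u\<in>U. c u * A (x # T u)))"] by blast
  have erel: "e i t = (\<Sum>u\<in>U. \<mu> t u * e i (T u))" if "i < r" "valid_index ms t" for i t
  proof -
    have "e i t = (\<Sum>x<n0. a i 0 x * A (x # t))" using IP that by simp
    also have "\<dots> = (\<Sum>x<n0. \<Sum>u\<in>U. \<mu> t u * (a i 0 x * A (x # T u)))"
      using \<mu>[OF that(2)] by (intro sum.cong refl) (simp add: sum_distrib_left mult.left_commute)
    also have "\<dots> = (\<Sum>u\<in>U. \<mu> t u * (\<Sum>x<n0. a i 0 x * A (x # T u)))"
      by (subst sum.swap) (simp add: sum_distrib_left)
    also have "\<dots> = (\<Sum>u\<in>U. \<mu> t u * e i (T u))"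
      using IP that(1) vTU by (intro sum.cong refl) simp
    finally show ?thesis .
  qed
  define d where "d = card U"
  obtain h where h: "bij_betw h {0..<d} U" using ex_bij_betw_nat_finite[OF finU] d_def by blast
  define w where "w i = vec d (\<lambda>p. e i (T (h p)))" for i
  have wC: "w ` {..<r} \<subseteq> carrier_vec d" unfolding w_def by auto
  obtain U' where U'W: "U' \<subseteq> w ` {..<r}" and U'card: "card U' \<le> d"
    and U'sp: "\<forall>v\<in>w ` {..<r}. \<exists>c. \<forall>p<d. v $ p = (\<Sum>u\<in>U'. c u * u $ p)"
    using vec_space.G_dim[OF wC] by blast
  have finU': "finite U'" by (rule finite_subset[OF U'W]) simp
  have "\<forall>v\<in>U'. \<exists>i<r. w i = v" using U'W by blast
  then obtain \<rho> where \<rho>0: "\<forall>v\<in>U'. \<rho> v < r \<and> w (\<rho> v) = v" by (rule bchoice[elim_format]) blast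
  have \<rho>: "\<rho> v < r \<and> w (\<rho> v) = v" if "v \<in> U'" for v using \<rho>0 that by blast
  have "\<forall>i. \<exists>c. i < r \<longrightarrow> (\<forall>p<d. w i $ p = (\<Sum>u\<in>U'. c u * u $ p))" using U'sp by blast
  then obtain lam where lam: "\<And>i p. i < r \<Longrightarrow> p < d \<Longrightarrow> w i $ p = (\<Sum>v\<in>U'. lam i v * v $ p)"
    using choice[of "\<lambda>i c. i < r \<longrightarrow> (\<forall>p<d. w i $ p = (\<Sum>u\<in>U'. c u * u $ p))"] by blast
  have wval: "v $ p = e (\<rho> v) (T (h p))" if "v \<in> U'" "p < d" for v p
  proof -
    have "v $ p = w (\<rho> v) $ p" using \<rho>[OF that(1)] by (simp only:)
    then show ?thesis unfolding w_def using that(2) by simp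
  qed
  have eU: "e i (T u) = (\<Sum>v\<in>U'. lam i v * e (\<rho> v) (T u))" if iu: "i < r" "u \<in> U" for i u
  proof -
    obtain p where p: "p < d" "u = h p" using h iu(2) unfolding bij_betw_def by auto
    have "e i (T u) = w i $ p" unfolding w_def using p by simp
    also have "\<dots> = (\<Sum>v\<in>U'. lam i v * v $ p)" using lam iu(1) p by blast
    also have "\<dots> = (\<Sum>v\<in>U'. lam i v * e (\<rho> v) (T u))" using wval p by (intro sum.cong refl) simp
    finally show ?thesis .
  qed
  have eall: "e i t = (\<Sum>v\<in>U'. lam i v * e (\<rho> v) t)" if "i < r" "valid_index ms t" for i t
  proof -
    have "e i t = (\<Sum>u\<in>U. \<mu> t u * e i (T u))" using erel that by blast
    also have "\<dots> = (\<Sum>u\<in>U. \<Sum>v\<in>U'. lam i v * (\<mu> t u * e (\<rho> v) (T u)))"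
      using eU that(1) by (intro sum.cong refl) (simp add: sum_distrib_left mult.left_commute)
    also have "\<dots> = (\<Sum>v\<in>U'. lam i v * (\<Sum>u\<in>U. \<mu> t u * e (\<rho> v) (T u)))"
      by (subst sum.swap) (simp add: sum_distrib_left)
    also have "\<dots> = (\<Sum>v\<in>U'. lam i v * e (\<rho> v) t)"
      using erel \<rho> that(2) by (intro sum.cong refl) simp
    finally show ?thesis .
  qed
  have Afin: "A (x # t) = (\<Sum>v\<in>U'. (\<Sum>i<r. a i 0 x * lam i v) * e (\<rho> v) t)"
    if "x < n0" "valid_index ms t" for x t
  proof -
    have "A (x # t) = (\<Sum>i<r. a i 0 x * e i t)" using Adec that by blast
    also have "\<dots> = (\<Sum>i<r. \<Sum>v\<in>U'. a i 0 x * lam i v * e (\<rho> v) t)"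
      using eall that(2) by (intro sum.cong refl) (simp add: sum_distrib_left mult.assoc)
    also have "\<dots> = (\<Sum>v\<in>U'. (\<Sum>i<r. a i 0 x * lam i v) * e (\<rho> v) t)"
      by (subst sum.swap) (simp add: sum_distrib_right)
    finally show ?thesis .
  qed
  obtain h' where h': "bij_betw h' {0..<card U'} U'" using ex_bij_betw_nat_finite[OF finU'] by blast
  define bb where "bb q l y = (if l = 0 then (\<Sum>i<r. a i 0 y * lam i (h' q)) * \<sigma> (\<rho> (h' q)) else a (\<rho> (h' q)) l y)"
    for q l y
  have dec: "\<forall>is. valid_index ns is \<longrightarrow> A is = (\<Sum>q<card U'. \<Prod>l<length ns. bb q l (is ! l))"
  proof (intro allI impI)
    fix "is" assume "valid_index ns is"
    then obtain x t where xt: "is = x # t" "x < n0" "valid_index ms t" using vCons by blast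
    have pq: "(\<Prod>l<length ns. bb q l (is ! l)) = (\<lambda>v. (\<Sum>i<r. a i 0 x * lam i v) * e (\<rho> v) t) (h' q)" for q
      unfolding xt(1) using prodC[of "bb q" x t] by (simp add: bb_def e_def mult.assoc)
    have "(\<Sum>q<card U'. \<Prod>l<length ns. bb q l (is ! l))
        = (\<Sum>q\<in>{0..<card U'}. (\<lambda>v. (\<Sum>i<r. a i 0 x * lam i v) * e (\<rho> v) t) (h' q))"
      unfolding pq atLeast0LessThan ..
    also have "\<dots> = (\<Sum>v\<in>U'. (\<Sum>i<r. a i 0 x * lam i v) * e (\<rho> v) t)"
      by (rule sum.reindex_bij_betw[OF h'])
    finally show "A is = (\<Sum>q<card U'. \<Prod>l<length ns. bb q l (is ! l))"
      using Afin[OF xt(2,3)] xt(1) by simp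
  qed
  have "cp_rank ns A \<le> card U'" unfolding cp_rank_def by (rule Least_le) (use dec in blast)
  then have le2: "cp_rank ns A \<le> vec_space.rank (ns ! 0) (flatten1 ns A)"
    using U'card Ucard d_def n00 by simp
  show ?thesis using le1 le2 by simp
qed

end
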